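(* Let $\gamma(t)$ be a curve on $S^{n-1}$, put $\omega=\frac1\varepsilon\gamma\wedge\dot\gamma$, and suppose there is $\lambda_0(t)\in so(n)$ orthogonal to $\mathbb R^n\wedge\gamma$ such that $$\frac{d}{dt}(\mathbf I\omega)=[\mathbf I\omega,\omega]+[\kappa,\omega]+\lambda_0,\qquad \dot\gamma=-\varepsilon\omega\gamma.$$ Then for all $t$ and all $\delta\gamma\in T_\gamma S^{n-1}$, $$\delta l-\mathbf{JK}(\dot\gamma,\delta\gamma)=\Big\langle\frac1{\varepsilon^2}\mathbf I(\gamma\wedge\ddot\gamma)\gamma+\frac1{\varepsilon^3}\mathbf I(\gamma\wedge\dot\gamma)\dot\gamma,\delta\gamma\Big\rangle=\mathbf f(\dot\gamma,\delta\gamma),$$ where $\delta l=\big\langle\frac{\partial l}{\partial\gamma}-\frac d{dt}\frac{\partial l}{\partial\dot\gamma},\delta\gamma\big\rangle$ and $\mathbf f(\dot\gamma,\delta\gamma)=\frac1{\varepsilon^2}\langle\dot\gamma,\kappa\delta\gamma\rangle$.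
   Context: Model of a balanced $n$-dimensional ball with a gyroscope rolling without slipping and twisting over a fixed sphere in $\mathbb R^n$ ($n\ge3$): the ball has radius $a$, mass $m$, $D=ma^2$; the sphere has radius $b$; $\varepsilon=b/(b+a)$ (ball outside the sphere) or $\varepsilon=b/(b-a)$ (ball inside the sphere, or spherical shell over a smaller sphere). On $so(n)$ use $\langle X,Y\rangle=-\frac12\operatorname{tr}(XY)$; on $\mathbb R^n$ the Euclidean product. For $x,y\in\mathbb R^n$, $x\wedge y=xy^T-yx^T\in so(n)$. $\mathbb I\colon so(n)\to so(n)$ is the inertia operator of the system and $\mathbf I=\mathbb I+D\,\mathrm{Id}_{so(n)}$, a symmetric positive definite operator; $\kappa\in so(n)$ is a fixed matrix (the gyroscope). The reduced Lagrangian on $TS^{n-1}$ is $l(\gamma,\dot\gamma)=-\frac1{2\varepsilon^2}\langle\mathbf I(\gamma\wedge\dot\gamma)\gamma,\dot\gamma\rangle$ and the $\mathbf{JK}$-term is $\mathbf{JK}(\dot\gamma,\delta\gamma)=\frac{2\varepsilon-1}{\varepsilon^3}\langle\mathbf I(\gamma\wedge\dot\gamma)\dot\gamma,\delta\gamma\rangle$. *)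

theory Defs
  imports "HOL-Analysis.Analysis"
begin

type_synonym 'n mat = "real^'n^'n"

definition so :: "'n::finite mat set" where
  "so = {X. transpose X = - X}"

definition so_inner :: "'n::finite mat \<Rightarrow> 'n mat \<Rightarrow> real" where
  "so_inner X Y = - (1/2) * trace (X ** Y)"

definition wedge :: "real^'n::finite \<Rightarrow> real^'n \<Rightarrow> 'n mat" where
  "wedge x y = (\<chi> i j. x$i * y$j - y$i * x$j)"

definition comm :: "'n::finite mat \<Rightarrow> 'n mat \<Rightarrow> 'n mat" where
  "comm X Y = X ** Y - Y ** X"

definition partial1 :: "(real^'n::finite \<Rightarrow> real^'n \<Rightarrow> real) \<Rightarrow> real^'n \<Rightarrow> real^'n \<Rightarrow> real^'n" where
  "partial1 L x v = (THE p. ((\<lambda>y. L y v) has_derivative (\<lambda>h. p \<bullet> h)) (at x))"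

definition partial2 :: "(real^'n::finite \<Rightarrow> real^'n \<Rightarrow> real) \<Rightarrow> real^'n \<Rightarrow> real^'n \<Rightarrow> real^'n" where
  "partial2 L x v = (THE p. ((\<lambda>w. L x w) has_derivative (\<lambda>h. p \<bullet> h)) (at v))"

definition delta_l :: "(real^'n::finite \<Rightarrow> real^'n \<Rightarrow> real) \<Rightarrow> (real \<Rightarrow> real^'n) \<Rightarrow> (real \<Rightarrow> real^'n)
    \<Rightarrow> real \<Rightarrow> real^'n \<Rightarrow> real" where
  "delta_l L g g' t dg =
     (partial1 L (g t) (g' t) - vector_derivative (\<lambda>s. partial2 L (g s) (g' s)) (at t)) \<bullet> dg"

definition boldI :: "('n::finite mat \<Rightarrow> 'n mat) \<Rightarrow> real \<Rightarrow> 'n mat \<Rightarrow> 'n mat" where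
  "boldI II D X = II X + D *\<^sub>R X"

definition lagr :: "('n::finite mat \<Rightarrow> 'n mat) \<Rightarrow> real \<Rightarrow> real^'n \<Rightarrow> real^'n \<Rightarrow> real" where
  "lagr IB \<epsilon> g v = - (1 / (2 * \<epsilon>^2)) * ((IB (wedge g v) *v g) \<bullet> v)"

definition JK :: "('n::finite mat \<Rightarrow> 'n mat) \<Rightarrow> real \<Rightarrow> real^'n \<Rightarrow> real^'n \<Rightarrow> real^'n \<Rightarrow> real" where
  "JK IB \<epsilon> g v dg = ((2*\<epsilon> - 1) / \<epsilon>^3) * ((IB (wedge g v) *v v) \<bullet> dg)"

definition gyro_f :: "'n::finite mat \<Rightarrow> real \<Rightarrow> real^'n \<Rightarrow> real^'n \<Rightarrow> real" where
  "gyro_f \<kappa> \<epsilon> v dg = (1 / \<epsilon>^2) * (v \<bullet> (\<kappa> *v dg))"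

end

theory Submission
  imports Defs
begin


lemma skew_entry: "transpose X = - X \<Longrightarrow> X$i$j = - X$j$i"
  by (metis (no_types, lifting) transpose_def neg_equal_iff_equal vec_lambda_beta vector_uminus_component)

lemma wedge_so: "wedge x y \<in> so"
  by (simp add: so_def wedge_def transpose_def vec_eq_iff)

lemma wedge_self: "wedge x x = 0"
  by (simp add: wedge_def vec_eq_iff)

lemma wedge_swap: "wedge x y = - wedge y x"
  by (simp add: wedge_def vec_eq_iff)

lemma wedge_mv: "wedge g u *v y = (u \<bullet> y) *\<^sub>R g - (g \<bullet> y) *\<^sub>R u"
  by (simp add: wedge_def vec_eq_iff matrix_vector_mult_def inner_vec_def algebra_simps
       sum_subtractf sum_distrib_left)

lemma mv_dot_skew:
  fixes X :: "real^'n::finite^'n"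
  assumes "transpose X = - X"
  shows "(X *v h) \<bullet> v = - ((X *v v) \<bullet> h)"
proof -
  have "(X *v h) \<bullet> v = (\<Sum>i\<in>UNIV. \<Sum>j\<in>UNIV. X$i$j * h$j * v$i)"
    by (simp add: matrix_vector_mult_def inner_vec_def sum_distrib_right)
  also have "\<dots> = (\<Sum>j\<in>UNIV. \<Sum>i\<in>UNIV. X$i$j * h$j * v$i)" by (rule sum.swap)
  also have "\<dots> = - (\<Sum>j\<in>UNIV. \<Sum>i\<in>UNIV. X$j$i * v$i * h$j)"
  proof -
    have e: "X$i$j * h$j * v$i = - (X$j$i * v$i * h$j)" for i j
      using skew_entry[OF assms, of i j] by simp
    show ?thesis by (simp add: e sum_negf)
  qed
  also have "\<dots> = - ((X *v v) \<bullet> h)"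
    by (simp add: matrix_vector_mult_def inner_vec_def sum_distrib_right)
  finally show ?thesis .
qed

lemma skew_quad: "transpose (X::real^'n::finite^'n) = - X \<Longrightarrow> (X *v g) \<bullet> g = 0"
  using mv_dot_skew[of X g g] by simp

lemma so_inner_wedge:
  fixes X :: "real^'n::finite^'n"
  assumes "transpose X = - X"
  shows "(X *v g) \<bullet> v = - so_inner X (wedge g v)"
proof -
  have t: "trace (X ** wedge g v) = (\<Sum>i\<in>UNIV. \<Sum>k\<in>UNIV. X$i$k * g$k * v$i)
        - (\<Sum>i\<in>UNIV. \<Sum>k\<in>UNIV. X$i$k * v$k * g$i)"
    by (simp add: trace_def matrix_matrix_mult_def wedge_def algebra_simps sum_subtractf)
  have a: "(\<Sum>i\<in>UNIV. \<Sum>k\<in>UNIV. X$i$k * g$k * v$i) = (X *v g) \<bullet> v"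
    by (simp add: matrix_vector_mult_def inner_vec_def sum_distrib_right)
  have b: "(\<Sum>i\<in>UNIV. \<Sum>k\<in>UNIV. X$i$k * v$k * g$i) = (X *v v) \<bullet> g"
    by (simp add: matrix_vector_mult_def inner_vec_def sum_distrib_right)
  show ?thesis using mv_dot_skew[OF assms, of g v]
    by (simp add: so_inner_def t a b)
qed

lemma so_inner_neg: "so_inner X (- Y) = - so_inner X Y"
  proof -
  have "X ** (- Y) = - (X ** Y)"
    by (simp add: matrix_matrix_mult_def vec_eq_iff sum_negf)
  then show ?thesis by (simp add: so_inner_def trace_def sum_negf)
qed
  
lemma so_inner_sym: "so_inner X Y = so_inner Y X"
  unfolding so_inner_def using trace_mul_sym[of X Y] by simp

lemma transpose_add': "transpose (X + Y) = transpose X + transpose (Y::'a::ring_1^'n^'m)"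
  by (simp add: transpose_def vec_eq_iff)
lemma so_add: "X \<in> so \<Longrightarrow> Y \<in> so \<Longrightarrow> X + Y \<in> so"
  unfolding so_def by (simp add: transpose_add')
lemma so_scale: "X \<in> so \<Longrightarrow> c *\<^sub>R X \<in> so"
  unfolding so_def by (simp add: transpose_scalar)
lemma so_skew: "X \<in> so \<Longrightarrow> transpose X = - X"
  by (simp add: so_def)

lemma bb_wedge: "bounded_bilinear (wedge :: real^'n::finite \<Rightarrow> _)"
  unfolding bilinear_conv_bounded_bilinear[symmetric] bilinear_def
  by (auto intro!: linearI simp: wedge_def vec_eq_iff algebra_simps)

lemma bb_mv: "bounded_bilinear (\<lambda>(A::real^'n::finite^'n) x. A *v x)"
  unfolding bilinear_conv_bounded_bilinear[symmetric] bilinear_def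
  by (auto intro!: linearI simp: matrix_vector_mult_def vec_eq_iff algebra_simps sum.distrib sum_distrib_left)

lemma d_g:
  fixes P :: "'n::finite mat \<Rightarrow> 'n mat"
  assumes blP: "bounded_linear P"
  shows "((\<lambda>y. (P (wedge y v) *v y) \<bullet> v) has_derivative
     (\<lambda>h. (P (wedge h v) *v x) \<bullet> v + (P (wedge x v) *v h) \<bullet> v)) (at x)"
proof -
  have 1: "((\<lambda>y. P (wedge y v)) has_derivative (\<lambda>h. P (wedge h v))) (at x)"
    using bounded_linear_compose[OF blP bounded_bilinear.bounded_linear_left[OF bb_wedge, of v]]
    by (intro bounded_linear_imp_has_derivative) simp
  have 2: "((\<lambda>y. P (wedge y v) *v y) has_derivative (\<lambda>h. P (wedge x v) *v h + P (wedge h v) *v x)) (at x)"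
    using bounded_bilinear.FDERIV[OF bb_mv 1 has_derivative_ident] by simp
  have 3: "((\<lambda>y. (P (wedge y v) *v y) \<bullet> v) has_derivative (\<lambda>h. (P (wedge x v) *v h + P (wedge h v) *v x) \<bullet> v)) (at x)"
    using bounded_linear.has_derivative[OF bounded_linear_inner_left 2] by simp
  show ?thesis
    by (rule has_derivative_eq_rhs[OF 3]) (simp add: fun_eq_iff inner_add_left)
qed

lemma d_v:
  fixes P :: "'n::finite mat \<Rightarrow> 'n mat"
  assumes blP: "bounded_linear P"
  shows "((\<lambda>w. (P (wedge x w) *v x) \<bullet> w) has_derivative
     (\<lambda>h. (P (wedge x w0) *v x) \<bullet> h + (P (wedge x h) *v x) \<bullet> w0)) (at w0)"
proof -
  have bl: "bounded_linear (\<lambda>h. P (wedge x h) *v x)"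
    using bounded_linear_compose[OF bounded_bilinear.bounded_linear_left[OF bb_mv, of x]
      bounded_linear_compose[OF blP bounded_bilinear.bounded_linear_right[OF bb_wedge, of x]]]
    by simp
  have 1: "((\<lambda>w. P (wedge x w) *v x) has_derivative (\<lambda>h. P (wedge x h) *v x)) (at w0)"
    using bl by (rule bounded_linear_imp_has_derivative)
  show ?thesis
    using bounded_bilinear.FDERIV[OF bounded_bilinear_inner 1 has_derivative_ident] by simp
qed

lemma grad_the:
  fixes p :: "real^'n::finite"
  assumes "(f has_derivative (\<lambda>h. p \<bullet> h)) (at x)"
  shows "(THE p. (f has_derivative (\<lambda>h. p \<bullet> h)) (at x)) = p"
proof (rule the_equality)
  show "(f has_derivative (\<lambda>h. p \<bullet> h)) (at x)" by fact
  fix q assume q: "(f has_derivative (\<lambda>h. q \<bullet> h)) (at x)"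
  have "(\<lambda>h. q \<bullet> h) = (\<lambda>h. p \<bullet> h)" by (rule has_derivative_unique[OF q assms])
  then have "q \<bullet> (q - p) = p \<bullet> (q - p)" by metis
  then have "(q - p) \<bullet> (q - p) = 0" by (simp add: inner_diff_left)
  then show "q = p" by simp
qed

lemma comm_mv: "comm X Y *v g = X *v (Y *v g) - Y *v (X *v (g::real^'n::finite))"
  by (simp add: comm_def matrix_vector_mult_diff_rdistrib matrix_vector_mul_assoc)

lemma sk_so: "(1/2::real) *\<^sub>R (X - transpose X) \<in> (so :: 'n::finite mat set)"
  by (simp add: so_def transpose_def vec_eq_iff field_simps)


lemma mv_neg: "(A::real^'n::finite^'m) *v (- x) = - (A *v x)"
  by (simp add: matrix_vector_mult_def vec_eq_iff sum_negf)


theorem proposition7p3: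
  fixes II :: "'n::finite mat \<Rightarrow> 'n mat"
    and \<kappa> :: "'n mat"
    and a b m \<epsilon> :: real
    and \<gamma> \<gamma>' \<gamma>'' :: "real \<Rightarrow> real^'n"
    and lam0 :: "real \<Rightarrow> 'n mat"
  assumes dim: "CARD('n) \<ge> 3"
    and a_pos: "a > 0" and b_pos: "b > 0" and m_pos: "m > 0"
    and eps: "\<epsilon> = b / (b + a) \<or> (b \<noteq> a \<and> \<epsilon> = b / (b - a))"
    and II_so: "\<forall>X\<in>so. II X \<in> so"
    and II_add: "\<forall>X\<in>so. \<forall>Y\<in>so. II (X + Y) = II X + II Y"
    and II_scale: "\<forall>X\<in>so. \<forall>c. II (c *\<^sub>R X) = c *\<^sub>R II X"
    and I_sym: "\<forall>X\<in>so. \<forall>Y\<in>so.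
        so_inner (boldI II (m * a^2) X) Y = so_inner X (boldI II (m * a^2) Y)"
    and I_posdef: "\<forall>X\<in>so. X \<noteq> 0 \<longrightarrow> so_inner (boldI II (m * a^2) X) X > 0"
    and kappa: "\<kappa> \<in> so"
    and sphere: "\<forall>t. norm (\<gamma> t) = 1"
    and d1: "\<forall>t. (\<gamma> has_vector_derivative \<gamma>' t) (at t)"
    and d2: "\<forall>t. (\<gamma>' has_vector_derivative \<gamma>'' t) (at t)"
    and lam_so: "\<forall>t. lam0 t \<in> so"
    and lam_orth: "\<forall>t. \<forall>x. so_inner (lam0 t) (wedge x (\<gamma> t)) = 0"
    and eq_motion: "\<forall>t. ((\<lambda>s. boldI II (m * a^2) ((1/\<epsilon>) *\<^sub>R wedge (\<gamma> s) (\<gamma>' s)))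
        has_vector_derivative
          (comm (boldI II (m * a^2) ((1/\<epsilon>) *\<^sub>R wedge (\<gamma> t) (\<gamma>' t)))
                ((1/\<epsilon>) *\<^sub>R wedge (\<gamma> t) (\<gamma>' t))
           + comm \<kappa> ((1/\<epsilon>) *\<^sub>R wedge (\<gamma> t) (\<gamma>' t)) + lam0 t)) (at t)"
    and eq_kin: "\<forall>t. \<gamma>' t = - \<epsilon> *\<^sub>R (((1/\<epsilon>) *\<^sub>R wedge (\<gamma> t) (\<gamma>' t)) *v \<gamma> t)"
  shows "\<forall>t. \<forall>\<delta>\<gamma>. \<delta>\<gamma> \<bullet> \<gamma> t = 0 \<longrightarrow>
     (let IB = boldI II (m * a^2);
          rhs = (1 / \<epsilon>^2) *\<^sub>R (IB (wedge (\<gamma> t) (\<gamma>'' t)) *v \<gamma> t)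
              + (1 / \<epsilon>^3) *\<^sub>R (IB (wedge (\<gamma> t) (\<gamma>' t)) *v \<gamma>' t)
      in delta_l (lagr IB \<epsilon>) \<gamma> \<gamma>' t \<delta>\<gamma> - JK IB \<epsilon> (\<gamma> t) (\<gamma>' t) \<delta>\<gamma> = rhs \<bullet> \<delta>\<gamma>
         \<and> rhs \<bullet> \<delta>\<gamma> = gyro_f \<kappa> \<epsilon> (\<gamma>' t) \<delta>\<gamma>)"

proof -
  define D where "D = m * a^2"
  define IB where "IB = boldI II D"
  have eps0: "\<epsilon> \<noteq> 0" using eps a_pos b_pos by auto
  have IB_so: "IB X \<in> so" if "X \<in> so" for X
    using II_so that by (simp add: IB_def boldI_def so_add so_scale)
  have IB_add: "IB (X + Y) = IB X + IB Y" if "X \<in> so" "Y \<in> so" for X Y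
    using II_add that by (simp add: IB_def boldI_def scaleR_right_distrib)
  have IB_scale: "IB (c *\<^sub>R X) = c *\<^sub>R IB X" if "X \<in> so" for X c
    using II_scale that by (simp add: IB_def boldI_def scaleR_right_distrib)
  have IB_sym: "so_inner (IB X) Y = so_inner X (IB Y)" if "X \<in> so" "Y \<in> so" for X Y
    using I_sym that by (simp add: IB_def D_def)
  define sk where "sk X = (1/2::real) *\<^sub>R (X - transpose X)" for X :: "'n mat"
  have sk_in: "sk X \<in> so" for X unfolding sk_def by (rule sk_so)
  have sk_id: "sk X = X" if "X \<in> so" for X
    using so_skew[OF that] by (simp add: sk_def)
  have sk_add: "sk (X + Y) = sk X + sk Y" for X Y
    by (simp add: sk_def transpose_add' algebra_simps)
  have sk_scale: "sk (c *\<^sub>R X) = c *\<^sub>R sk X" for X c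
    by (simp add: sk_def transpose_scalar algebra_simps)
  define P where "P X = IB (sk X)" for X
  have P_IB: "P X = IB X" if "X \<in> so" for X using sk_id[OF that] by (simp add: P_def)
  have blP: "bounded_linear P"
    by (rule bounded_linearI') (simp_all add: P_def sk_add sk_scale IB_add IB_scale sk_in)
  have skIB: "transpose (IB X) = - IB X" if "X \<in> so" for X
    using so_skew[OF IB_so[OF that]] .
  have key: "(IB (wedge h v) *v x) \<bullet> v = (IB (wedge x v) *v h) \<bullet> v" for h v x
  proof -
    have "(IB (wedge h v) *v x) \<bullet> v = - so_inner (IB (wedge h v)) (wedge x v)"
      by (rule so_inner_wedge[OF skIB[OF wedge_so]])
    also have "\<dots> = - so_inner (wedge h v) (IB (wedge x v))"
      by (simp add: IB_sym wedge_so)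
    also have "\<dots> = - so_inner (IB (wedge x v)) (wedge h v)"
      by (simp add: so_inner_sym)
    also have "\<dots> = (IB (wedge x v) *v h) \<bullet> v"
      by (rule so_inner_wedge[OF skIB[OF wedge_so], symmetric])
    finally show ?thesis .
  qed
  have lagrP: "lagr IB \<epsilon> y v = - (1 / (2 * \<epsilon>^2)) * ((P (wedge y v) *v y) \<bullet> v)" for y v
    by (simp add: lagr_def P_IB wedge_so)
  have part1: "partial1 (lagr IB \<epsilon>) x v = (1/\<epsilon>^2) *\<^sub>R (IB (wedge x v) *v v)" for x v
  proof -
    have f: "(\<lambda>y. lagr IB \<epsilon> y v) = (\<lambda>y. - (1 / (2 * \<epsilon>^2)) * ((P (wedge y v) *v y) \<bullet> v))"
      by (simp add: lagrP)
    have d: "((\<lambda>y. lagr IB \<epsilon> y v) has_derivative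
        (\<lambda>h. - (1 / (2 * \<epsilon>^2)) * ((P (wedge h v) *v x) \<bullet> v + (P (wedge x v) *v h) \<bullet> v))) (at x)"
      unfolding f by (rule bounded_linear.has_derivative[OF bounded_linear_mult_right d_g[OF blP]])
    have e: "(\<lambda>h. - (1 / (2 * \<epsilon>^2)) * ((P (wedge h v) *v x) \<bullet> v + (P (wedge x v) *v h) \<bullet> v))
        = (\<lambda>h. ((1/\<epsilon>^2) *\<^sub>R (IB (wedge x v) *v v)) \<bullet> h)"
    proof
      fix h
      have "(P (wedge h v) *v x) \<bullet> v + (P (wedge x v) *v h) \<bullet> v = 2 * ((IB (wedge x v) *v h) \<bullet> v)"
        using key[of h v x] by (simp add: P_IB wedge_so)
      also have "\<dots> = - 2 * ((IB (wedge x v) *v v) \<bullet> h)"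
        using mv_dot_skew[OF skIB[OF wedge_so[of x v]], of h v] by simp
      finally show "- (1 / (2 * \<epsilon>^2)) * ((P (wedge h v) *v x) \<bullet> v + (P (wedge x v) *v h) \<bullet> v)
          = ((1/\<epsilon>^2) *\<^sub>R (IB (wedge x v) *v v)) \<bullet> h"
        using eps0 by (simp add: field_simps)
    qed
    show ?thesis unfolding partial1_def
      by (rule grad_the) (use d e in simp)
  qed
  have part2: "partial2 (lagr IB \<epsilon>) x w = (- (1/\<epsilon>^2)) *\<^sub>R (IB (wedge x w) *v x)" for x w
  proof -
    have f: "(\<lambda>w. lagr IB \<epsilon> x w) = (\<lambda>w. - (1 / (2 * \<epsilon>^2)) * ((P (wedge x w) *v x) \<bullet> w))"
      by (simp add: lagrP)
    have d: "((\<lambda>w. lagr IB \<epsilon> x w) has_derivative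
        (\<lambda>h. - (1 / (2 * \<epsilon>^2)) * ((P (wedge x w) *v x) \<bullet> h + (P (wedge x h) *v x) \<bullet> w))) (at w)"
      unfolding f by (rule bounded_linear.has_derivative[OF bounded_linear_mult_right d_v[OF blP]])
    have e: "(\<lambda>h. - (1 / (2 * \<epsilon>^2)) * ((P (wedge x w) *v x) \<bullet> h + (P (wedge x h) *v x) \<bullet> w))
        = (\<lambda>h. ((- (1/\<epsilon>^2)) *\<^sub>R (IB (wedge x w) *v x)) \<bullet> h)"
    proof
      fix h
      have "(IB (wedge x h) *v x) \<bullet> w = (IB (wedge x w) *v x) \<bullet> h"
      proof -
        have "(IB (wedge x h) *v x) \<bullet> w = - so_inner (IB (wedge x h)) (wedge x w)"
          by (rule so_inner_wedge[OF skIB[OF wedge_so]])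
        also have "\<dots> = - so_inner (wedge x h) (IB (wedge x w))"
          by (simp add: IB_sym wedge_so)
        also have "\<dots> = - so_inner (IB (wedge x w)) (wedge x h)"
          by (simp add: so_inner_sym)
        also have "\<dots> = (IB (wedge x w) *v x) \<bullet> h"
          by (rule so_inner_wedge[OF skIB[OF wedge_so], symmetric])
        finally show ?thesis .
      qed
      then have "(P (wedge x w) *v x) \<bullet> h + (P (wedge x h) *v x) \<bullet> w = 2 * ((IB (wedge x w) *v x) \<bullet> h)"
        by (simp add: P_IB wedge_so)
      then show "- (1 / (2 * \<epsilon>^2)) * ((P (wedge x w) *v x) \<bullet> h + (P (wedge x h) *v x) \<bullet> w)
          = ((- (1/\<epsilon>^2)) *\<^sub>R (IB (wedge x w) *v x)) \<bullet> h"
        using eps0 by (simp add: field_simps)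
    qed
    show ?thesis unfolding partial2_def
      by (rule grad_the) (use d e in simp)
  qed
  show ?thesis
  proof (intro allI impI)
    fix t :: real and \<delta>\<gamma> :: "real^'n"
    assume h\<delta>: "\<delta>\<gamma> \<bullet> \<gamma> t = 0"
    define g where "g = \<gamma> t"
    define g1 where "g1 = \<gamma>' t"
    define g2 where "g2 = \<gamma>'' t"
    have W1: "((\<lambda>s. wedge (\<gamma> s) (\<gamma>' s)) has_vector_derivative
        (wedge g g2 + wedge g1 g1)) (at t)"
      unfolding g_def g1_def g2_def
      by (rule bounded_bilinear.has_vector_derivative[OF bb_wedge d1[rule_format] d2[rule_format]])
    have W2: "((\<lambda>s. P (wedge (\<gamma> s) (\<gamma>' s))) has_vector_derivative IB (wedge g g2)) (at t)"
      using bounded_linear.has_vector_derivative[OF blP W1]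
      by (simp add: wedge_self P_IB wedge_so)
    have W3: "((\<lambda>s. P (wedge (\<gamma> s) (\<gamma>' s)) *v \<gamma> s) has_vector_derivative
        (IB (wedge g g1) *v g1 + IB (wedge g g2) *v g)) (at t)"
      using bounded_bilinear.has_vector_derivative[OF bb_mv W2 d1[rule_format]]
      by (simp add: P_IB wedge_so g_def g1_def)
    have W4: "((\<lambda>s. partial2 (lagr IB \<epsilon>) (\<gamma> s) (\<gamma>' s)) has_vector_derivative
        (- (1/\<epsilon>^2)) *\<^sub>R (IB (wedge g g1) *v g1 + IB (wedge g g2) *v g)) (at t)"
      using bounded_linear.has_vector_derivative[OF bounded_linear_scaleR_right W3, of "- (1/\<epsilon>^2)"]
      by (simp add: part2 P_IB wedge_so)
    have vd: "vector_derivative (\<lambda>s. partial2 (lagr IB \<epsilon>) (\<gamma> s) (\<gamma>' s)) (at t)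
       = (- (1/\<epsilon>^2)) *\<^sub>R (IB (wedge g g1) *v g1 + IB (wedge g g2) *v g)"
      by (rule vector_derivative_at[OF W4])
    define A where "A = (IB (wedge g g2) *v g) \<bullet> \<delta>\<gamma>"
    define B where "B = (IB (wedge g g1) *v g1) \<bullet> \<delta>\<gamma>"
    define rhs where "rhs = (1 / \<epsilon>^2) *\<^sub>R (IB (wedge g g2) *v g) + (1 / \<epsilon>^3) *\<^sub>R (IB (wedge g g1) *v g1)"
    have rhsAB: "rhs \<bullet> \<delta>\<gamma> = A / \<epsilon>^2 + B / \<epsilon>^3"
      by (simp add: rhs_def A_def B_def inner_add_left)
    have first: "delta_l (lagr IB \<epsilon>) \<gamma> \<gamma>' t \<delta>\<gamma> - JK IB \<epsilon> (\<gamma> t) (\<gamma>' t) \<delta>\<gamma> = rhs \<bullet> \<delta>\<gamma>"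
    proof -
      have dl0: "delta_l (lagr IB \<epsilon>) \<gamma> \<gamma>' t \<delta>\<gamma> = (1/\<epsilon>^2) * B - (- (1/\<epsilon>^2)) * (B + A)"
        unfolding delta_l_def vd part1 inner_diff_left inner_scaleR_left inner_add_left
          g_def[symmetric] g1_def[symmetric] A_def[symmetric] B_def[symmetric] by (rule refl)
      have jk: "JK IB \<epsilon> (\<gamma> t) (\<gamma>' t) \<delta>\<gamma> = (2*\<epsilon> - 1) / \<epsilon>^3 * B"
        by (simp add: JK_def B_def g_def g1_def)
      have ar: "(1/\<epsilon>^2) * B - (- (1/\<epsilon>^2)) * (B + A) - (2*\<epsilon> - 1) / \<epsilon>^3 * B = A / \<epsilon>^2 + B / \<epsilon>^3"
        using eps0 by (simp add: field_simps power2_eq_square power3_eq_cube)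
      show ?thesis unfolding dl0 jk rhsAB by (rule ar)
    qed
    define \<omega> where "\<omega> = (1/\<epsilon>) *\<^sub>R wedge g g1"
    define W where "W = IB \<omega>"
    have \<omega>so: "\<omega> \<in> so" unfolding \<omega>_def by (rule so_scale[OF wedge_so])
    have IBeq: "boldI II (m * a^2) = IB" by (simp add: IB_def D_def)
    have fIB: "(\<lambda>s. IB ((1/\<epsilon>) *\<^sub>R wedge (\<gamma> s) (\<gamma>' s))) = (\<lambda>s. (1/\<epsilon>) *\<^sub>R P (wedge (\<gamma> s) (\<gamma>' s)))"
      by (simp add: IB_scale P_IB wedge_so)
    have Md: "((\<lambda>s. IB ((1/\<epsilon>) *\<^sub>R wedge (\<gamma> s) (\<gamma>' s))) has_vector_derivative (1/\<epsilon>) *\<^sub>R IB (wedge g g2)) (at t)"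
      unfolding fIB by (rule bounded_linear.has_vector_derivative[OF bounded_linear_scaleR_right W2])
    have Me: "((\<lambda>s. IB ((1/\<epsilon>) *\<^sub>R wedge (\<gamma> s) (\<gamma>' s))) has_vector_derivative
        (comm W \<omega> + comm \<kappa> \<omega> + lam0 t)) (at t)"
      using eq_motion[rule_format, of t] unfolding IBeq W_def \<omega>_def g_def g1_def .
    have M: "(1/\<epsilon>) *\<^sub>R IB (wedge g g2) = comm W \<omega> + comm \<kappa> \<omega> + lam0 t"
      by (rule vector_derivative_unique_at[OF Md Me])
    have IBg2: "IB (wedge g g2) = \<epsilon> *\<^sub>R (comm W \<omega> + comm \<kappa> \<omega> + lam0 t)"
    proof -
      have "IB (wedge g g2) = \<epsilon> *\<^sub>R ((1/\<epsilon>) *\<^sub>R IB (wedge g g2))" using eps0 by simp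
      then show ?thesis unfolding M .
    qed
    have IBg1: "IB (wedge g g1) = \<epsilon> *\<^sub>R W"
      using eps0 by (simp add: W_def \<omega>_def IB_scale wedge_so)
    have kin: "g1 = - \<epsilon> *\<^sub>R (\<omega> *v g)"
      using eq_kin[rule_format, of t] unfolding \<omega>_def g_def g1_def .
    have gd: "g \<bullet> \<delta>\<gamma> = 0" using h\<delta> by (simp add: g_def inner_commute)
    have zf: "(\<omega> *v y) \<bullet> \<delta>\<gamma> = - (1/\<epsilon>) * ((g \<bullet> y) * (g1 \<bullet> \<delta>\<gamma>))" for y
      unfolding \<omega>_def scaleR_matrix_vector_assoc[symmetric] wedge_mv
      by (simp add: inner_diff_left gd)
    have z1: "(\<omega> *v (W *v g)) \<bullet> \<delta>\<gamma> = 0"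
    proof -
      have "(W *v g) \<bullet> g = 0" unfolding W_def by (rule skew_quad[OF so_skew[OF IB_so[OF \<omega>so]]])
      then show ?thesis using zf[of "W *v g"] by (simp add: inner_commute[of g])
    qed
    have z2: "(\<omega> *v (\<kappa> *v g)) \<bullet> \<delta>\<gamma> = 0"
    proof -
      have "(\<kappa> *v g) \<bullet> g = 0" by (rule skew_quad[OF so_skew[OF kappa]])
      then show ?thesis using zf[of "\<kappa> *v g"] by (simp add: inner_commute[of g])
    qed
    have z3: "(lam0 t *v g) \<bullet> \<delta>\<gamma> = 0"
    proof -
      have "(lam0 t *v g) \<bullet> \<delta>\<gamma> = - so_inner (lam0 t) (wedge g \<delta>\<gamma>)"
        by (rule so_inner_wedge[OF so_skew[OF lam_so[rule_format]]])
      also have "\<dots> = so_inner (lam0 t) (wedge \<delta>\<gamma> g)"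
        by (simp add: wedge_swap[of g \<delta>\<gamma>] so_inner_neg)
      also have "\<dots> = 0" using lam_orth[rule_format, of t \<delta>\<gamma>] by (simp add: g_def)
      finally show ?thesis .
    qed
    define X1 where "X1 = (W *v (\<omega> *v g)) \<bullet> \<delta>\<gamma>"
    define X2 where "X2 = (\<kappa> *v (\<omega> *v g)) \<bullet> \<delta>\<gamma>"
    have hA: "A = \<epsilon> * (X1 + X2)"
      unfolding A_def IBg2 X1_def X2_def
      by (simp add: scaleR_matrix_vector_assoc[symmetric] matrix_vector_mult_add_rdistrib comm_mv
          inner_add_left inner_diff_left z1 z2 z3)
    have hB: "B = - (\<epsilon>^2) * X1"
      unfolding B_def IBg1 X1_def
      by (subst kin) (simp add: scaleR_matrix_vector_assoc[symmetric] matrix_vector_mult_scaleR mv_neg power2_eq_square)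
    have hG: "gyro_f \<kappa> \<epsilon> g1 \<delta>\<gamma> = (1/\<epsilon>) * X2"
    proof -
      have "g1 \<bullet> (\<kappa> *v \<delta>\<gamma>) = (\<kappa> *v \<delta>\<gamma>) \<bullet> g1" by (rule inner_commute)
      also have "\<dots> = - ((\<kappa> *v g1) \<bullet> \<delta>\<gamma>)" by (rule mv_dot_skew[OF so_skew[OF kappa]])
      also have "\<dots> = \<epsilon> * X2"
        unfolding X2_def by (subst kin) (simp add: matrix_vector_mult_scaleR mv_neg)
      finally show ?thesis using eps0 by (simp add: gyro_f_def power2_eq_square)
    qed
    have second: "rhs \<bullet> \<delta>\<gamma> = gyro_f \<kappa> \<epsilon> g1 \<delta>\<gamma>"
      unfolding rhsAB hA hB hG using eps0 by (simp add: field_simps power2_eq_square power3_eq_cube)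
    show "let IB = boldI II (m * a^2);
          rhs = (1 / \<epsilon>^2) *\<^sub>R (IB (wedge (\<gamma> t) (\<gamma>'' t)) *v \<gamma> t)
              + (1 / \<epsilon>^3) *\<^sub>R (IB (wedge (\<gamma> t) (\<gamma>' t)) *v \<gamma>' t)
      in delta_l (lagr IB \<epsilon>) \<gamma> \<gamma>' t \<delta>\<gamma> - JK IB \<epsilon> (\<gamma> t) (\<gamma>' t) \<delta>\<gamma> = rhs \<bullet> \<delta>\<gamma>
         \<and> rhs \<bullet> \<delta>\<gamma> = gyro_f \<kappa> \<epsilon> (\<gamma>' t) \<delta>\<gamma>"
      unfolding Let_def IBeq using first second by (simp add: rhs_def g_def g1_def g2_def)
  qed
qed

end
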